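(* Let $n$ be a positive integer with $n \equiv 1 \pmod{3}$, let $a = (n(n+1)-2)/3$, and let $\sigma$ be a permutation of $\mathbb{Z}_n = \{0,\dots,n-1\}$ such that $f_\sigma(\delta) \in \{a, a+2\}$ for every $\delta \in \{1,\dots,n-1\}$ (a near-perfect permutation). Then the Latin square $L$ defined by $L[i][j] = (i + \sigma^{-1}(j)) \bmod n$ for $i,j \in \{0,\dots,n-1\}$ satisfies $$I(L) = \frac{4n(n-1)}{9}.$$
   Context: For a permutation $\sigma$ of $\mathbb{Z}_n$, the shift correlation at shift $\delta$ is $f_\sigma(\delta) = \sum_{j=0}^{n-1} \lvert \sigma((j+\delta) \bmod n) - \sigma(j) \rvert$, where $\sigma$ takes values in $\{0,\dots,n-1\}$ and the absolute value is of ordinary integers. For an $n\times n$ Latin square $L$ (each symbol of $\{0,\dots,n-1\}$ occurring exactly once in each row and column; rows and columns indexed by $\{0,\dots,n-1\}$), $\mathrm{pos}(r,s)$ is the column containing symbol $s$ in row $r$, $d(r_1,r_2) = \sum_{s=0}^{n-1} \lvert \mathrm{pos}(r_1,s) - \mathrm{pos}(r_2,s)\rvert$, and the imbalance is $I(L) = \frac{1}{3} \sum_{0 \le r_1 < r_2 \le n-1} \lvert 3\, d(r_1,r_2) - n(n+1) \rvert$. *)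

theory Defs
  imports Complex_Main
begin

definition shift_corr :: "nat \<Rightarrow> (nat \<Rightarrow> nat) \<Rightarrow> nat \<Rightarrow> int" where
  "shift_corr n \<sigma> \<delta> = (\<Sum>j<n. \<bar>int (\<sigma> ((j + \<delta>) mod n)) - int (\<sigma> j)\<bar>)"

definition latin_square :: "nat \<Rightarrow> (nat \<Rightarrow> nat \<Rightarrow> nat) \<Rightarrow> bool" where
  "latin_square n L \<longleftrightarrow>
     (\<forall>r<n. bij_betw (\<lambda>c. L r c) {..<n} {..<n}) \<and>
     (\<forall>c<n. bij_betw (\<lambda>r. L r c) {..<n} {..<n})"

definition pos :: "nat \<Rightarrow> (nat \<Rightarrow> nat \<Rightarrow> nat) \<Rightarrow> nat \<Rightarrow> nat \<Rightarrow> nat" where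
  "pos n L r s = (THE c. c < n \<and> L r c = s)"

definition row_dist :: "nat \<Rightarrow> (nat \<Rightarrow> nat \<Rightarrow> nat) \<Rightarrow> nat \<Rightarrow> nat \<Rightarrow> int" where
  "row_dist n L r1 r2 = (\<Sum>s<n. \<bar>int (pos n L r1 s) - int (pos n L r2 s)\<bar>)"

definition imbalance :: "nat \<Rightarrow> (nat \<Rightarrow> nat \<Rightarrow> nat) \<Rightarrow> real" where
  "imbalance n L = (1/3) * (\<Sum>(r1, r2) \<in> {(r1, r2). r1 < r2 \<and> r2 < n}.
      real_of_int \<bar>3 * row_dist n L r1 r2 - int (n * (n + 1))\<bar>)"

end

theory Submission
  imports Defs
begin

lemma rot_sum:
  fixes h :: "nat \<Rightarrow> 'a::comm_monoid_add"
  shows "(\<Sum>s<n. h ((s + c) mod n)) = (\<Sum>s<n. h s)"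
proof (cases "n = 0")
  case True then show ?thesis by simp
next
  case False
  have inj: "inj_on (\<lambda>s. (s + c) mod n) {..<n}"
  proof (rule inj_onI)
    fix x y assume x: "x \<in> {..<n}" and y: "y \<in> {..<n}" and e: "(x + c) mod n = (y + c) mod n"
    have e2: "(int x + int c) mod int n = (int y + int c) mod int n"
      using e by (metis of_nat_add zmod_int)
    have "int x = (int x + int c - int c) mod int n" using x by simp
    also have "\<dots> = ((int x + int c) mod int n - int c) mod int n" by (simp add: mod_diff_left_eq)
    also have "\<dots> = ((int y + int c) mod int n - int c) mod int n" using e2 by simp
    also have "\<dots> = int y" using y by (simp add: mod_diff_left_eq)
    finally show "x = y" by simp
  qed
  have img: "(\<lambda>s. (s + c) mod n) ` {..<n} = {..<n}"
    by (rule endo_inj_surj) (use False inj in auto)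
  have "bij_betw (\<lambda>s. (s + c) mod n) {..<n} {..<n}"
    using inj img by (simp add: bij_betw_def)
  then show ?thesis by (rule sum.reindex_bij_betw)
qed

lemma sum_abs_diff:
  "3 * (\<Sum>x<n. \<Sum>y<n. \<bar>int y - int x\<bar>) = int n ^ 3 - int n"
proof (induction n)
  case 0 then show ?case by simp
next
  case (Suc n)
  have t: "2 * (\<Sum>x<n. \<bar>int n - int x\<bar>) = int n * (int n + 1)"
  proof -
    have "\<And>m. m \<le> n \<Longrightarrow> 2 * (\<Sum>x<m. (int n - int x)) = int m * (2 * int n - int m + 1)"
    proof -
      fix m show "m \<le> n \<Longrightarrow> 2 * (\<Sum>x<m. (int n - int x)) = int m * (2 * int n - int m + 1)"
        by (induction m) (auto simp: algebra_simps)
    qed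
    from this[of n] show ?thesis by (simp add: algebra_simps)
  qed
  have t2: "(\<Sum>x<n. \<bar>int x - int n\<bar>) = (\<Sum>x<n. \<bar>int n - int x\<bar>)"
    by (simp add: abs_minus_commute)
  have "(\<Sum>x<Suc n. \<Sum>y<Suc n. \<bar>int y - int x\<bar>)
      = (\<Sum>x<n. \<Sum>y<n. \<bar>int y - int x\<bar>) + (\<Sum>x<n. \<bar>int n - int x\<bar>) + (\<Sum>y<n. \<bar>int y - int n\<bar>)"
    by (simp add: sum.distrib)
  then have "3 * (\<Sum>x<Suc n. \<Sum>y<Suc n. \<bar>int y - int x\<bar>) = int n ^ 3 - int n + 3 * (int n * (int n + 1))"
    using Suc.IH t t2 by (simp add: algebra_simps)
  then show ?case by (simp add: algebra_simps power3_eq_cube)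
qed

lemma sym_split:
  fixes G :: "nat \<Rightarrow> nat \<Rightarrow> int"
  assumes sym: "\<And>x y. G x y = G y x"
  shows "(\<Sum>x<n. \<Sum>y<n. G x y) = 2 * (\<Sum>(r1, r2) \<in> {(r1, r2). r1 < r2 \<and> r2 < n}. G r1 r2) + (\<Sum>x<n. G x x)"
proof -
  have split: "(\<Sum>y<n. G x y) = (\<Sum>y\<in>{y. y \<in> {..<n} \<and> x < y}. G x y) + G x x + (\<Sum>y\<in>{y. y \<in> {..<n} \<and> y < x}. G x y)"
    if "x < n" for x
  proof -
    have "{..<n} = {y. y \<in> {..<n} \<and> x < y} \<union> ({x} \<union> {y. y \<in> {..<n} \<and> y < x})"
      using that by auto
    then have "(\<Sum>y<n. G x y) = (\<Sum>y\<in>{y. y \<in> {..<n} \<and> x < y} \<union> ({x} \<union> {y. y \<in> {..<n} \<and> y < x}). G x y)"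
      by (rule arg_cong)
    also have "\<dots> = (\<Sum>y\<in>{y. y \<in> {..<n} \<and> x < y}. G x y) + (\<Sum>y\<in>{x} \<union> {y. y \<in> {..<n} \<and> y < x}. G x y)"
      by (rule sum.union_disjoint) auto
    also have "(\<Sum>y\<in>{x} \<union> {y. y \<in> {..<n} \<and> y < x}. G x y) = G x x + (\<Sum>y\<in>{y. y \<in> {..<n} \<and> y < x}. G x y)"
      by (subst sum.union_disjoint) auto
    finally show ?thesis by simp
  qed
  have A: "(\<Sum>x<n. \<Sum>y<n. G x y) = (\<Sum>x<n. \<Sum>y\<in>{y. y \<in> {..<n} \<and> x < y}. G x y) + (\<Sum>x<n. G x x) + (\<Sum>x<n. \<Sum>y\<in>{y. y \<in> {..<n} \<and> y < x}. G x y)"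
    using split by (simp add: sum.distrib)
  have B: "(\<Sum>x<n. \<Sum>y\<in>{y. y \<in> {..<n} \<and> y < x}. G x y) = (\<Sum>y<n. \<Sum>x\<in>{x. x \<in> {..<n} \<and> y < x}. G x y)"
    by (rule sum.swap_restrict) auto
  have C: "(\<Sum>y<n. \<Sum>x\<in>{x. x \<in> {..<n} \<and> y < x}. G x y) = (\<Sum>y<n. \<Sum>x\<in>{x. x \<in> {..<n} \<and> y < x}. G y x)"
    using sym by simp
  have P: "{(r1, r2). r1 < r2 \<and> r2 < n} = (SIGMA x:{..<n}. {y. y \<in> {..<n} \<and> x < y})" by auto
  have D: "(\<Sum>(r1, r2) \<in> {(r1, r2). r1 < r2 \<and> r2 < n}. G r1 r2) = (\<Sum>x<n. \<Sum>y\<in>{y. y \<in> {..<n} \<and> x < y}. G x y)"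
    unfolding P by (rule sum.Sigma[symmetric]) auto
  show ?thesis using A B C D by simp
qed


theorem proposition5:
  fixes n :: nat and \<sigma> :: "nat \<Rightarrow> nat" and a :: int
  assumes "n > 0"
    and "n mod 3 = 1"
    and "a = (int (n * (n + 1)) - 2) div 3"
    and "bij_betw \<sigma> {..<n} {..<n}"
    and "\<forall>\<delta>\<in>{1..n-1}. shift_corr n \<sigma> \<delta> \<in> {a, a + 2}"
  shows "imbalance n (\<lambda>i j. (i + inv_into {..<n} \<sigma> j) mod n)
           = 4 * real n * (real n - 1) / 9"
proof -
  note npos = assms(1) and bij = assms(4)
  define \<tau> where "\<tau> = inv_into {..<n} \<sigma>"
  define L where "L = (\<lambda>i j. (i + \<tau> j) mod n)"
  define f where "f = shift_corr n \<sigma>"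
  have inj: "inj_on \<sigma> {..<n}" and img: "\<sigma> ` {..<n} = {..<n}" using bij by (auto simp: bij_betw_def)
  have t1: "\<tau> (\<sigma> x) = x" if "x < n" for x unfolding \<tau>_def using inj that by simp
  have t2: "\<sigma> (\<tau> c) = c" if "c < n" for c unfolding \<tau>_def using img that by (simp add: f_inv_into_f)
  have t3: "\<tau> c < n" if "c < n" for c unfolding \<tau>_def using img that
    by (metis inv_into_into lessThan_iff)
  have s3: "\<sigma> x < n" if "x < n" for x using img that by auto
  have modlem: "((r + t) mod n + n - r) mod n = t" if "t < n" "r < n" for r t
  proof (cases "r + t < n")
    case True then show ?thesis using that by simp
  next
    case False
    then have "(r + t) mod n = r + t - n" using that by (simp add: le_mod_geq)
    then show ?thesis using that False by simp
  qed
  have pos_eq: "pos n L r s = \<sigma> ((s + n - r) mod n)" if r: "r < n" and s: "s < n" for r s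
    unfolding pos_def
  proof (rule the_equality)
    have "(r + (s + n - r) mod n) mod n = (r + (s + n - r)) mod n" by (simp add: mod_add_right_eq)
    also have "\<dots> = s" using r s by simp
    finally show "\<sigma> ((s + n - r) mod n) < n \<and> L r (\<sigma> ((s + n - r) mod n)) = s"
      using s3 npos unfolding L_def by (simp add: t1)
  next
    fix c assume c: "c < n \<and> L r c = s"
    then have "(r + \<tau> c) mod n = s" unfolding L_def by simp
    then have "\<tau> c = (s + n - r) mod n" using modlem[of "\<tau> c" r] t3 c r by simp
    then show "c = \<sigma> ((s + n - r) mod n)" using t2 c by metis
  qed
  have rd: "row_dist n L r1 r2 = f ((r2 + n - r1) mod n)" if r1: "r1 < n" and r2: "r2 < n" for r1 r2
  proof -
    define \<delta> where "\<delta> = (r2 + n - r1) mod n"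
    define h where "h = (\<lambda>j. \<bar>int (\<sigma> ((j + \<delta>) mod n)) - int (\<sigma> j)\<bar>)"
    have "row_dist n L r1 r2 = (\<Sum>s<n. h ((s + (n - r2)) mod n))"
      unfolding row_dist_def
    proof (rule sum.cong)
      fix s assume "s \<in> {..<n}"
      then have s: "s < n" by simp
      have "((s + (n - r2)) mod n + \<delta>) mod n = (s + (n - r2) + (r2 + n - r1)) mod n"
        unfolding \<delta>_def by (simp add: mod_add_eq)
      also have "s + (n - r2) + (r2 + n - r1) = (s + n - r1) + n" using r1 r2 by simp
      also have "(s + n - r1 + n) mod n = (s + n - r1) mod n" by simp
      finally show "\<bar>int (pos n L r1 s) - int (pos n L r2 s)\<bar> = h ((s + (n - r2)) mod n)"
        unfolding h_def using pos_eq r1 r2 s by (simp add: add.commute)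
    qed simp
    also have "\<dots> = (\<Sum>s<n. h s)" by (rule rot_sum)
    finally show ?thesis unfolding h_def f_def shift_corr_def \<delta>_def .
  qed
  have f0: "f 0 = 0" unfolding f_def shift_corr_def by simp
  have sumf: "3 * (\<Sum>d<n. f d) = int n ^ 3 - int n"
  proof -
    have "(\<Sum>d<n. f d) = (\<Sum>j<n. \<Sum>d<n. \<bar>int (\<sigma> ((d + j) mod n)) - int (\<sigma> j)\<bar>)"
      unfolding f_def shift_corr_def by (subst sum.swap) (simp add: add.commute)
    also have "\<dots> = (\<Sum>j<n. \<Sum>k<n. \<bar>int (\<sigma> k) - int (\<sigma> j)\<bar>)"
      by (rule sum.cong[OF refl], rule rot_sum)
    also have "\<dots> = (\<Sum>j<n. \<Sum>y<n. \<bar>int y - int (\<sigma> j)\<bar>)"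
      by (rule sum.cong[OF refl], rule sum.reindex_bij_betw[OF bij])
    also have "\<dots> = (\<Sum>x<n. \<Sum>y<n. \<bar>int y - int x\<bar>)"
      by (rule sum.reindex_bij_betw[OF bij])
    finally show ?thesis using sum_abs_diff by simp
  qed
  define h where "h = (\<lambda>d. \<bar>3 * f d - int (n * (n + 1))\<bar>)"
  have a3: "3 * a = int (n * (n + 1)) - 2"
  proof -
    have "n * (n + 1) mod 3 = 2" using assms(2) by (simp add: mod_mult_eq[symmetric] mod_add_eq[symmetric])
    then have "(int (n * (n + 1)) - 2) mod 3 = 0"
      by (metis add_diff_cancel_right' diff_self mod_0 mod_diff_left_eq of_nat_mod of_nat_numeral)
    then show ?thesis using assms(3) by (metis dvd_div_mult_self mod_0_imp_dvd mult.commute)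
  qed
  have hD: "h d = 2 + f d - a" if "d \<in> {1..<n}" for d
  proof -
    have "d \<in> {1..n-1}" using that by auto
    then have "f d = a \<or> f d = a + 2" using assms(5) unfolding f_def by auto
    then show ?thesis unfolding h_def using a3 by auto
  qed
  have split0: "{..<n} = insert 0 {1..<n}" using npos by auto
  have sumfD: "(\<Sum>d<n. f d) = (\<Sum>d\<in>{1..<n}. f d)" unfolding split0 using f0 by simp
  have sumhD: "(\<Sum>d<n. h d) = int (n * (n + 1)) + (\<Sum>d\<in>{1..<n}. h d)"
    proof -
    have "h 0 = int (n * (n + 1))" unfolding h_def f0
      by (metis abs_minus_cancel abs_of_nat diff_0 mult_zero_right)
    then show ?thesis unfolding split0 by simp
  qed
  have sumh3: "3 * (\<Sum>d\<in>{1..<n}. h d) = 8 * (int n - 1)"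
  proof -
    have "(\<Sum>d\<in>{1..<n}. h d) = (\<Sum>d\<in>{1..<n}. 2 - a + f d)" using hD by (intro sum.cong) auto
    also have "\<dots> = (int n - 1) * (2 - a) + (\<Sum>d\<in>{1..<n}. f d)"
      using npos by (simp add: sum.distrib of_nat_diff)
    finally have "3 * (\<Sum>d\<in>{1..<n}. h d) = (int n - 1) * (6 - 3 * a) + 3 * (\<Sum>d<n. f d)"
      using sumfD by (simp add: algebra_simps)
    also have "\<dots> = (int n - 1) * (8 - int n * (int n + 1)) + (int n ^ 3 - int n)"
    proof -
      have "6 - 3 * a = 8 - int n * (int n + 1)" using a3 by (simp add: algebra_simps)
      then show ?thesis using sumf by simp
    qed
    also have "\<dots> = 8 * (int n - 1)" by (simp add: algebra_simps power3_eq_cube)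
    finally show ?thesis .
  qed
  define G where "G = (\<lambda>r1 r2. \<bar>3 * row_dist n L r1 r2 - int (n * (n + 1))\<bar>)"
  have Gsym: "G x y = G y x" for x y
    unfolding G_def row_dist_def by (simp add: abs_minus_commute)
  have Gxx: "G x x = int (n * (n + 1))" for x
  proof -
    have "row_dist n L x x = 0" unfolding row_dist_def by simp
    then show ?thesis unfolding G_def by (metis abs_minus_cancel abs_of_nat diff_0 mult_zero_right)
  qed
  have Gd: "(\<Sum>x<n. G x x) = int n * int (n * (n + 1))" by (simp only: Gxx sum_constant card_lessThan of_nat_id)
  have Gall: "(\<Sum>x<n. \<Sum>y<n. G x y) = int n * (\<Sum>d<n. h d)"
  proof -
    have "(\<Sum>x<n. \<Sum>y<n. G x y) = (\<Sum>x<n. \<Sum>y<n. h ((y + (n - x)) mod n))"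
      unfolding G_def h_def by (intro sum.cong refl) (simp add: rd)
    also have "\<dots> = (\<Sum>x<n. \<Sum>y<n. h y)" by (intro sum.cong refl rot_sum)
    finally show ?thesis by simp
  qed
  define S where "S = (\<Sum>(r1, r2) \<in> {(r1, r2). r1 < r2 \<and> r2 < n}. G r1 r2)"
  define HD where "HD = (\<Sum>d\<in>{1..<n}. h d)"
  have sp: "(\<Sum>x<n. \<Sum>y<n. G x y) = 2 * S + int n * int (n * (n + 1))"
    using sym_split[of G n, OF Gsym] Gd unfolding S_def by simp
  have ga: "(\<Sum>x<n. \<Sum>y<n. G x y) = int n * int (n * (n + 1)) + int n * HD"
    using Gall sumhD unfolding HD_def by (simp add: distrib_left)
  have two: "2 * S = int n * HD" using sp ga by linarith
  have six: "6 * S = int n * (8 * (int n - 1))"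
  proof -
    have "6 * S = 3 * (2 * S)" by simp
    also have "\<dots> = int n * (3 * HD)" using two by simp
    also have "\<dots> = int n * (8 * (int n - 1))" using sumh3 unfolding HD_def by simp
    finally show ?thesis .
  qed
  have E: "6 * real_of_int S = real n * (8 * (real n - 1))"
  proof -
    have "real_of_int (6 * S) = real_of_int (int n * (8 * (int n - 1)))" using six by simp
    then show ?thesis by simp
  qed
  have I1: "imbalance n (\<lambda>i j. (i + inv_into {..<n} \<sigma> j) mod n)
      = (1/3) * (\<Sum>(r1, r2) \<in> {(r1, r2). r1 < r2 \<and> r2 < n}. real_of_int (G r1 r2))"
    unfolding imbalance_def G_def L_def \<tau>_def by simp
  have I2: "(\<Sum>(r1, r2) \<in> {(r1, r2). r1 < r2 \<and> r2 < n}. real_of_int (G r1 r2)) = real_of_int S"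
    unfolding S_def of_int_sum by (rule sum.cong) auto
  show ?thesis unfolding I1 I2 using E by (simp add: field_simps)
qed

end
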